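(* Suppose $F$ satisfies the symmetry condition $F(p+\phi^0)=F(p-\phi^0)$ for all $p\in\operatorname{span}\{\phi^1,\dots,\phi^n\}$. Then there is a constant $C_2$ depending only on $F$ such that $$F(p-\phi^0)\,D^2F|_{p-\phi^0}(p,q)\le C_2\,\frac{F(q)}{F(p-\phi^0)}$$ for all $p,q\in\operatorname{span}\{\phi^1,\dots,\phi^n\}$.
   Context: $V^*\cong\mathbb{R}^{n+1}$ has a basis $\phi^0,\dots,\phi^n$. $F:V^*\to\mathbb{R}$ is positive on $V^*\setminus\{0\}$, convex, $C^3$ on $V^*\setminus\{0\}$, homogeneous of degree one, with uniformly convex sublevel sets. $D^2F|_\nu$ denotes the Hessian of $F$ at $\nu$ as a symmetric bilinear form. *)

theory Defs
  imports "HOL-Analysis.Analysis"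
begin

definition D1 :: "('a::real_normed_vector \<Rightarrow> real) \<Rightarrow> 'a \<Rightarrow> 'a \<Rightarrow> real" where
  "D1 F x u = frechet_derivative F (at x) u"

definition D2 :: "('a::real_normed_vector \<Rightarrow> real) \<Rightarrow> 'a \<Rightarrow> 'a \<Rightarrow> 'a \<Rightarrow> real" where
  "D2 F x u v = frechet_derivative (\<lambda>y. D1 F y u) (at x) v"

definition D3 :: "('a::real_normed_vector \<Rightarrow> real) \<Rightarrow> 'a \<Rightarrow> 'a \<Rightarrow> 'a \<Rightarrow> 'a \<Rightarrow> real" where
  "D3 F x u v w = frechet_derivative (\<lambda>y. D2 F y u v) (at x) w"

definition C3_on :: "'a::real_normed_vector set \<Rightarrow> ('a \<Rightarrow> real) \<Rightarrow> bool" where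
  "C3_on S F \<longleftrightarrow> open S \<and>
     (\<forall>x\<in>S. F differentiable (at x)) \<and>
     (\<forall>x\<in>S. \<forall>u. (\<lambda>y. D1 F y u) differentiable (at x)) \<and>
     (\<forall>x\<in>S. \<forall>u v. (\<lambda>y. D2 F y u v) differentiable (at x)) \<and>
     (\<forall>u v w. continuous_on S (\<lambda>y. D3 F y u v w))"

definition uniformly_convex_set :: "'a::real_normed_vector set \<Rightarrow> bool" where
  "uniformly_convex_set K \<longleftrightarrow> convex K \<and>
     (\<exists>c>0. \<forall>x\<in>K. \<forall>y\<in>K. cball ((1/2) *\<^sub>R (x + y)) (c * (norm (x - y))\<^sup>2) \<subseteq> K)"

end

theory Submission
  imports Defs
begin

locale hF =
  fixes F :: "'a::euclidean_space \<Rightarrow> real"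
  assumes smooth: "C3_on (UNIV - {0}) F"
    and hom: "\<forall>t x. t > 0 \<longrightarrow> F (t *\<^sub>R x) = t * F x"
begin

lemma F0: "F 0 = 0"
  using hom[rule_format, of 2 0] by simp

lemma F_has: "x \<noteq> 0 \<Longrightarrow> (F has_derivative D1 F x) (at x)"
  using smooth unfolding C3_on_def D1_def
  by (auto intro!: frechet_derivative_works[THEN iffD1] ext)

lemma D1_lin: "x \<noteq> 0 \<Longrightarrow> linear (D1 F x)"
  using F_has has_derivative_linear by blast

lemma D1_has: "x \<noteq> 0 \<Longrightarrow> ((\<lambda>z. D1 F z w) has_derivative D2 F x w) (at x)"
proof -
  assume "x \<noteq> 0"
  then have "(\<lambda>z. D1 F z w) differentiable (at x)" using smooth unfolding C3_on_def by auto
  then have "((\<lambda>z. D1 F z w) has_derivative frechet_derivative (\<lambda>z. D1 F z w) (at x)) (at x)"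
    using frechet_derivative_works by blast
  moreover have "frechet_derivative (\<lambda>z. D1 F z w) (at x) = D2 F x w"
    by (rule ext) (simp add: D2_def)
  ultimately show ?thesis by simp
qed

lemma D2_lin: "x \<noteq> 0 \<Longrightarrow> linear (D2 F x w)"
  using D1_has has_derivative_linear by blast

lemma D2_has: "x \<noteq> 0 \<Longrightarrow> ((\<lambda>z. D2 F z u v) has_derivative D3 F x u v) (at x)"
proof -
  assume "x \<noteq> 0"
  then have "(\<lambda>z. D2 F z u v) differentiable (at x)" using smooth unfolding C3_on_def by auto
  then have "((\<lambda>z. D2 F z u v) has_derivative frechet_derivative (\<lambda>z. D2 F z u v) (at x)) (at x)"
    using frechet_derivative_works by blast
  moreover have "frechet_derivative (\<lambda>z. D2 F z u v) (at x) = D3 F x u v"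
    by (rule ext) (simp add: D3_def)
  ultimately show ?thesis by simp
qed

lemma open_nz: "open (UNIV - {0::'a})" by auto

lemma D2_first_add: assumes "x \<noteq> 0"
  shows "D2 F x (w1 + w2) v = D2 F x w1 v + D2 F x w2 v"
proof -
  have "((\<lambda>z. D1 F z w1 + D1 F z w2) has_derivative (\<lambda>v. D2 F x w1 v + D2 F x w2 v)) (at x)"
    using D1_has[OF assms] by (intro has_derivative_add) auto
  then have "((\<lambda>z. D1 F z (w1 + w2)) has_derivative (\<lambda>v. D2 F x w1 v + D2 F x w2 v)) (at x)"
    apply (rule has_derivative_transform_within_open[OF _ open_nz])
    using assms D1_lin by (auto simp: linear_add)
  from has_derivative_unique[OF D1_has[OF assms] this] show ?thesis by metis
qed

lemma D2_first_scale: assumes "x \<noteq> 0"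
  shows "D2 F x (c *\<^sub>R w) v = c * D2 F x w v"
proof -
  have "((\<lambda>z. c * D1 F z w) has_derivative (\<lambda>v. c * D2 F x w v)) (at x)"
    using D1_has[OF assms] by (intro has_derivative_mult_right) auto
  then have "((\<lambda>z. D1 F z (c *\<^sub>R w)) has_derivative (\<lambda>v. c * D2 F x w v)) (at x)"
    apply (rule has_derivative_transform_within_open[OF _ open_nz])
    using assms D1_lin by (auto simp: linear_scale)
  from has_derivative_unique[OF D1_has[OF assms] this] show ?thesis by metis
qed

lemma D2_first_lin: "x \<noteq> 0 \<Longrightarrow> linear (\<lambda>w. D2 F x w v)"
  by (rule linearI) (simp_all add: D2_first_add D2_first_scale)

lemma euler: assumes "x \<noteq> 0" shows "D1 F x x = F x"
proof -
  have d1: "((\<lambda>t::real. t *\<^sub>R x) has_derivative (\<lambda>h. h *\<^sub>R x)) (at 1)"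
    by (intro derivative_eq_intros) auto
  have "((\<lambda>t. F (t *\<^sub>R x)) has_derivative (\<lambda>h. D1 F x (h *\<^sub>R x))) (at 1)"
    using has_derivative_compose[OF d1, of F "D1 F x"] F_has[OF assms] by simp
  then have "((\<lambda>t. t * F x) has_derivative (\<lambda>h. D1 F x (h *\<^sub>R x))) (at 1)"
    apply (rule has_derivative_transform_within_open[where s="{0<..}"])
    using hom by auto
  moreover have "((\<lambda>t. t * F x) has_derivative (\<lambda>h. h * F x)) (at 1)"
    by (intro derivative_eq_intros) auto
  ultimately have "(\<lambda>h. D1 F x (h *\<^sub>R x)) = (\<lambda>h. h * F x)" by (rule has_derivative_unique)
  then show ?thesis by (metis mult_1 scaleR_one)
qed


lemma D2_self: assumes "x \<noteq> 0" shows "D2 F x x q = 0"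
proof -
  have rep: "D1 F z z = (\<Sum>b\<in>Basis. (z \<bullet> b) * D1 F z b)" if "z \<noteq> 0" for z
  proof -
    have "D1 F z z = D1 F z (\<Sum>b\<in>Basis. (z \<bullet> b) *\<^sub>R b)" by (simp add: euclidean_representation)
    also have "\<dots> = (\<Sum>b\<in>Basis. (z \<bullet> b) * D1 F z b)"
      using D1_lin[OF that] by (simp add: linear_sum linear_scale)
    finally show ?thesis .
  qed
  have "((\<lambda>z. \<Sum>b\<in>Basis. (z \<bullet> b) * D1 F z b) has_derivative
        (\<lambda>v. \<Sum>b\<in>Basis. (x \<bullet> b) * D2 F x b v + (v \<bullet> b) * D1 F x b)) (at x)"
    using D1_has[OF assms] by (intro derivative_eq_intros) auto
  then have "(F has_derivative
        (\<lambda>v. \<Sum>b\<in>Basis. (x \<bullet> b) * D2 F x b v + (v \<bullet> b) * D1 F x b)) (at x)"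
    apply (rule has_derivative_transform_within_open[OF _ open_nz])
    using assms rep euler by auto
  from has_derivative_unique[OF F_has[OF assms] this]
  have "D1 F x q = (\<Sum>b\<in>Basis. (x \<bullet> b) * D2 F x b q + (q \<bullet> b) * D1 F x b)" by metis
  also have "\<dots> = (\<Sum>b\<in>Basis. (x \<bullet> b) * D2 F x b q) + (\<Sum>b\<in>Basis. (q \<bullet> b) * D1 F x b)"
    by (simp add: sum.distrib)
  also have "(\<Sum>b\<in>Basis. (x \<bullet> b) * D2 F x b q) = D2 F x (\<Sum>b\<in>Basis. (x \<bullet> b) *\<^sub>R b) q"
    by (simp only: linear_sum[OF D2_first_lin[OF assms, of q]] linear_scale[OF D2_first_lin[OF assms, of q]] real_scaleR_def)
  also have "(\<Sum>b\<in>Basis. (q \<bullet> b) * D1 F x b) = D1 F x (\<Sum>b\<in>Basis. (q \<bullet> b) *\<^sub>R b)"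
    using D1_lin[OF assms] by (simp add: linear_sum linear_scale)
  finally show ?thesis by (simp add: euclidean_representation)
qed

lemma D1_hom: assumes "c > 0" "z \<noteq> 0" shows "D1 F (c *\<^sub>R z) = D1 F z"
proof -
  have cz: "c *\<^sub>R z \<noteq> 0" using assms by auto
  have d1: "((\<lambda>y. c *\<^sub>R y) has_derivative (\<lambda>h. c *\<^sub>R h)) (at z)"
    by (intro derivative_eq_intros) auto
  have "((\<lambda>y. F (c *\<^sub>R y)) has_derivative (\<lambda>h. D1 F (c *\<^sub>R z) (c *\<^sub>R h))) (at z)"
    using has_derivative_compose[OF d1, of F] F_has[OF cz] by simp
  moreover have "((\<lambda>y. F (c *\<^sub>R y)) has_derivative (\<lambda>h. c * D1 F z h)) (at z)"
    using F_has[OF assms(2)] has_derivative_mult_right[of F "D1 F z" "at z" c] hom assms(1)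
    by simp
  ultimately have "(\<lambda>h. D1 F (c *\<^sub>R z) (c *\<^sub>R h)) = (\<lambda>h. c * D1 F z h)"
    by (rule has_derivative_unique)
  then have "\<And>h. c * D1 F (c *\<^sub>R z) h = c * D1 F z h"
    using D1_lin[OF cz] by (metis linear_scale real_scaleR_def)
  then show ?thesis using assms(1) by auto
qed

lemma D2_hom: assumes "c > 0" "y \<noteq> 0" shows "D2 F (c *\<^sub>R y) u v = D2 F y u v / c"
proof -
  have cy: "c *\<^sub>R y \<noteq> 0" using assms by auto
  have d1: "((\<lambda>y. c *\<^sub>R y) has_derivative (\<lambda>h. c *\<^sub>R h)) (at y)"
    by (intro derivative_eq_intros) auto
  have "((\<lambda>z. D1 F (c *\<^sub>R z) u) has_derivative (\<lambda>h. D2 F (c *\<^sub>R y) u (c *\<^sub>R h))) (at y)"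
    using has_derivative_compose[OF d1, of "\<lambda>z. D1 F z u"] D1_has[OF cy] by simp
  then have "((\<lambda>z. D1 F z u) has_derivative (\<lambda>h. D2 F (c *\<^sub>R y) u (c *\<^sub>R h))) (at y)"
    apply (rule has_derivative_transform_within_open[OF _ open_nz])
    using assms D1_hom by auto
  from has_derivative_unique[OF D1_has[OF assms(2)] this]
  have "D2 F y u v = D2 F (c *\<^sub>R y) u (c *\<^sub>R v)" by metis
  also have "\<dots> = c * D2 F (c *\<^sub>R y) u v" using D2_lin[OF cy] by (simp add: linear_scale)
  finally show ?thesis using assms(1) by auto
qed

lemma D3_expand: assumes "z \<noteq> 0"
  shows "D3 F z w q v = (\<Sum>b\<in>Basis. (q \<bullet> b) * D3 F z w b v)"
proof -
  have rep: "D2 F y w q = (\<Sum>b\<in>Basis. (q \<bullet> b) * D2 F y w b)" if "y \<noteq> 0" for y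
  proof -
    have "D2 F y w q = D2 F y w (\<Sum>b\<in>Basis. (q \<bullet> b) *\<^sub>R b)" by (simp add: euclidean_representation)
    also have "\<dots> = (\<Sum>b\<in>Basis. (q \<bullet> b) * D2 F y w b)"
      using D2_lin[OF that] by (simp add: linear_sum linear_scale)
    finally show ?thesis .
  qed
  have "((\<lambda>y. \<Sum>b\<in>Basis. (q \<bullet> b) * D2 F y w b) has_derivative
        (\<lambda>v. \<Sum>b\<in>Basis. (q \<bullet> b) * D3 F z w b v)) (at z)"
    using D2_has[OF assms] by (intro derivative_eq_intros) auto
  then have "((\<lambda>y. D2 F y w q) has_derivative
        (\<lambda>v. \<Sum>b\<in>Basis. (q \<bullet> b) * D3 F z w b v)) (at z)"
    apply (rule has_derivative_transform_within_open[OF _ open_nz])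
    using assms rep by auto
  from has_derivative_unique[OF D2_has[OF assms] this] show ?thesis by metis
qed


lemma even: assumes sym: "\<forall>p\<in>span S. F (p + a) = F (p - a)" and u: "u \<in> span S"
  shows "F (u + t *\<^sub>R a) = F (u - t *\<^sub>R a)"
proof -
  have pos: "F (u + t *\<^sub>R a) = F (u - t *\<^sub>R a)" if "t > 0" "u \<in> span S" for t u
  proof -
    have "F (u + t *\<^sub>R a) = F (t *\<^sub>R ((1/t) *\<^sub>R u + a))" using that by (simp add: algebra_simps)
    also have "\<dots> = t * F ((1/t) *\<^sub>R u + a)" using hom that by blast
    also have "F ((1/t) *\<^sub>R u + a) = F ((1/t) *\<^sub>R u - a)" using sym that span_mul
      by (metis scaleR_conv_of_real span_scale)
    also have "t * F ((1/t) *\<^sub>R u - a) = F (t *\<^sub>R ((1/t) *\<^sub>R u - a))" using hom that by metis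
    also have "\<dots> = F (u - t *\<^sub>R a)" using that by (simp add: algebra_simps)
    finally show ?thesis .
  qed
  show ?thesis
  proof (cases "t > 0")
    case True then show ?thesis using pos u by blast
  next
    case False
    show ?thesis
    proof (cases "t = 0")
      case True then show ?thesis by simp
    next
      case False
      then have "-t > 0" using \<open>\<not> t > 0\<close> by auto
      from pos[OF this u] show ?thesis by simp
    qed
  qed
qed

lemma D1_zero: assumes sym: "\<forall>p\<in>span S. F (p + a) = F (p - a)" and u: "u \<in> span S" "u \<noteq> 0"
  shows "D1 F u a = 0"
proof -
  have d1: "((\<lambda>t::real. u + t *\<^sub>R a) has_derivative (\<lambda>h. h *\<^sub>R a)) (at 0)"
    by (intro derivative_eq_intros) auto
  have d2: "((\<lambda>t::real. u - t *\<^sub>R a) has_derivative (\<lambda>h. - (h *\<^sub>R a))) (at 0)"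
    by (intro derivative_eq_intros) auto
  have "((\<lambda>t. F (u + t *\<^sub>R a)) has_derivative (\<lambda>h. D1 F u (h *\<^sub>R a))) (at 0)"
    using has_derivative_compose[OF d1, of F "D1 F u"] F_has[OF u(2)] by simp
  moreover have "((\<lambda>t. F (u - t *\<^sub>R a)) has_derivative (\<lambda>h. D1 F u (- (h *\<^sub>R a)))) (at 0)"
    using has_derivative_compose[OF d2, of F "D1 F u"] F_has[OF u(2)] by simp
  moreover have "(\<lambda>t. F (u + t *\<^sub>R a)) = (\<lambda>t. F (u - t *\<^sub>R a))"
    using even[OF sym u(1)] by auto
  ultimately have "(\<lambda>h. D1 F u (h *\<^sub>R a)) = (\<lambda>h. D1 F u (- (h *\<^sub>R a)))"
    using has_derivative_unique by metis
  then have "D1 F u a = D1 F u (- a)" by (metis scaleR_one)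
  then show ?thesis using D1_lin[OF u(2)] by (simp add: linear_neg)
qed

lemma D2_zero: assumes sym: "\<forall>p\<in>span S. F (p + a) = F (p - a)"
  and u: "u \<in> span S" "u \<noteq> 0" and q: "q \<in> span S"
  shows "D2 F u a q = 0"
proof -
  have d1: "((\<lambda>t::real. u + t *\<^sub>R q) has_derivative (\<lambda>h. h *\<^sub>R q)) (at 0)"
    by (intro derivative_eq_intros) auto
  have "((\<lambda>t. D1 F (u + t *\<^sub>R q) a) has_derivative (\<lambda>h. D2 F u a (h *\<^sub>R q))) (at 0)"
    using has_derivative_compose[OF d1, of "\<lambda>z. D1 F z a" "D2 F u a"] D1_has[OF u(2)] by simp
  then have "((\<lambda>t. 0) has_derivative (\<lambda>h. D2 F u a (h *\<^sub>R q))) (at 0)"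
  proof (rule has_derivative_transform_within_open[where s="{t. u + t *\<^sub>R q \<noteq> 0}"])
    show "open {t. u + t *\<^sub>R q \<noteq> 0}"
      by (intro open_Collect_neq continuous_intros)
    show "(0::real) \<in> {t. u + t *\<^sub>R q \<noteq> 0}" using u by simp
    fix t assume "t \<in> {t. u + t *\<^sub>R q \<noteq> 0}"
    then show "D1 F (u + t *\<^sub>R q) a = 0"
      using D1_zero[OF sym] u q by (simp add: span_add span_mul)
  qed
  moreover have "((\<lambda>t. 0) has_derivative (\<lambda>h. 0)) (at (0::real))" by simp
  ultimately have "(\<lambda>h. D2 F u a (h *\<^sub>R q)) = (\<lambda>h. 0)" using has_derivative_unique by metis
  then show ?thesis by (metis scaleR_one)
qed


lemma D2_expand: "y \<noteq> 0 \<Longrightarrow> D2 F y w q = (\<Sum>b\<in>Basis. (q \<bullet> b) * D2 F y w b)"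
proof -
  assume y: "y \<noteq> 0"
  have "D2 F y w q = D2 F y w (\<Sum>b\<in>Basis. (q \<bullet> b) *\<^sub>R b)" by (simp add: euclidean_representation)
  also have "\<dots> = (\<Sum>b\<in>Basis. (q \<bullet> b) * D2 F y w b)"
    using D2_lin[OF y] by (simp add: linear_sum linear_scale)
  finally show ?thesis .
qed

lemma D2_cont: "A \<subseteq> UNIV - {0} \<Longrightarrow> continuous_on A (\<lambda>z. D2 F z w b)"
proof -
  assume A: "A \<subseteq> UNIV - {0}"
  show ?thesis
  proof (rule continuous_at_imp_continuous_on, rule ballI)
    fix x assume "x \<in> A"
    then have "x \<noteq> 0" using A by auto
    from has_derivative_continuous[OF D2_has[OF this]] show "isCont (\<lambda>z. D2 F z w b) x" .
  qed
qed

lemma D3_cont: "A \<subseteq> UNIV - {0} \<Longrightarrow> continuous_on A (\<lambda>z. D3 F z u v w)"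
proof -
  assume A: "A \<subseteq> UNIV - {0}"
  have "continuous_on (UNIV - {0}) (\<lambda>z. D3 F z u v w)" using smooth unfolding C3_on_def by simp
  from continuous_on_subset[OF this A] show ?thesis .
qed

end

lemma compact_lin_bound:
  fixes G :: "'a::euclidean_space \<Rightarrow> 'a \<Rightarrow> real"
  assumes "compact A" "\<And>b. continuous_on A (\<lambda>z. G z b)"
    and "\<And>z q. z \<in> A \<Longrightarrow> G z q = (\<Sum>b\<in>Basis. (q \<bullet> b) * G z b)"
  shows "\<exists>K\<ge>0. \<forall>z\<in>A. \<forall>q. \<bar>G z q\<bar> \<le> K * norm q"
proof -
  have "continuous_on A (\<lambda>z. \<Sum>b\<in>Basis. \<bar>G z b\<bar>)"
    using assms(2) by (intro continuous_intros) 
  then have "bounded ((\<lambda>z. \<Sum>b\<in>Basis. \<bar>G z b\<bar>) ` A)"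
    by (rule compact_imp_bounded[OF compact_continuous_image[OF _ assms(1)]])
  then obtain c where c: "\<forall>z\<in>A. norm (\<Sum>b\<in>Basis. \<bar>G z b\<bar>) \<le> c"
    unfolding bounded_iff by blast
  show ?thesis
  proof (intro exI[of _ "max c 0"] conjI ballI allI)
    fix z q assume z: "z \<in> A"
    have "\<bar>G z q\<bar> = \<bar>\<Sum>b\<in>Basis. (q \<bullet> b) * G z b\<bar>" using assms(3)[OF z, of q] by (rule arg_cong)
    also have "\<dots> \<le> (\<Sum>b\<in>Basis. \<bar>(q \<bullet> b) * G z b\<bar>)" by (rule sum_abs)
    also have "\<dots> \<le> (\<Sum>b\<in>Basis. norm q * \<bar>G z b\<bar>)"
    proof (intro sum_mono)
      fix b :: 'a assume "b \<in> Basis"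
      then have "\<bar>q \<bullet> b\<bar> \<le> norm q" by (rule Basis_le_norm)
      then show "\<bar>(q \<bullet> b) * G z b\<bar> \<le> norm q * \<bar>G z b\<bar>"
        unfolding abs_mult by (rule mult_right_mono) simp
    qed
    also have "\<dots> = norm q * (\<Sum>b\<in>Basis. \<bar>G z b\<bar>)" by (rule sum_distrib_left[symmetric])
    also have "\<dots> \<le> norm q * max c 0"
    proof (rule mult_left_mono)
      have "norm (\<Sum>b\<in>Basis. \<bar>G z b\<bar>) \<le> c" using c z by blast
      moreover have "norm (\<Sum>b\<in>Basis. \<bar>G z b\<bar>) = (\<Sum>b\<in>Basis. \<bar>G z b\<bar>)"
        by (simp add: sum_nonneg)
      ultimately show "(\<Sum>b\<in>Basis. \<bar>G z b\<bar>) \<le> max c 0" by linarith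
    qed simp
    finally show "\<bar>G z q\<bar> \<le> max c 0 * norm q" by (simp only: mult.commute)
  qed simp
qed
locale hF2 = hF +
  assumes pos: "\<forall>x. x \<noteq> 0 \<longrightarrow> F x > 0"
    and cvx: "convex_on UNIV F"
begin

lemma Fcont: "continuous_on UNIV F"
  using convex_on_continuous[OF open_UNIV cvx] .

lemma lower: "\<exists>m>0. \<forall>y. m * norm y \<le> F y"
proof -
  have "sphere (0::'a) 1 \<noteq> {}"
    by simp
  then obtain x0 where x0: "x0 \<in> sphere 0 1" "\<forall>y\<in>sphere 0 1. F x0 \<le> F y"
    using continuous_attains_inf[OF compact_sphere _ continuous_on_subset[OF Fcont]] by blast
  have m: "F x0 > 0" using pos x0(1) by (metis mem_sphere_0 norm_zero zero_neq_one)
  show ?thesis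
  proof (intro exI[of _ "F x0"] conjI allI m)
    fix y :: 'a
    show "F x0 * norm y \<le> F y"
    proof (cases "y = 0")
      case True then show ?thesis using F0 by simp
    next
      case False
      have "F x0 \<le> F ((1 / norm y) *\<^sub>R y)" using x0(2) False by simp
      then have "norm y * F x0 \<le> norm y * F ((1 / norm y) *\<^sub>R y)" by (simp add: mult_left_mono)
      also have "\<dots> = F (norm y *\<^sub>R ((1 / norm y) *\<^sub>R y))" using hom False by simp
      also have "\<dots> = F y" using False by simp
      finally show ?thesis by (simp add: mult.commute)
    qed
  qed
qed

lemma subadd: "F (x + y) \<le> F x + F y"
proof -
  have "F (x + y) = F ((1 - 1/2) *\<^sub>R (2 *\<^sub>R x) + (1/2) *\<^sub>R (2 *\<^sub>R y))" by simp
  also have "\<dots> \<le> (1 - 1/2) * F (2 *\<^sub>R x) + (1/2) * F (2 *\<^sub>R y)"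
    by (rule convex_onD[OF cvx]) auto
  also have "\<dots> = F x + F y" using hom by simp
  finally show ?thesis .
qed

lemma compactA: "compact {y. 1/2 \<le> F y \<and> F y \<le> 1}"
proof -
  obtain m where m: "m > 0" "\<forall>y. m * norm y \<le> F y" using lower by blast
  have "closed {y. 1/2 \<le> F y \<and> F y \<le> 1}"
  proof -
    have "{y. 1/2 \<le> F y \<and> F y \<le> 1} = F -` {1/2..1}" by auto
    then show ?thesis using continuous_closed_vimage Fcont closed_atLeastAtMost
      by (metis continuous_on_eq_continuous_within iso_tuple_UNIV_I)
  qed
  moreover have "bounded {y. 1/2 \<le> F y \<and> F y \<le> 1}"
    unfolding bounded_iff
  proof (intro exI[of _ "1/m"] ballI)
    fix y assume "y \<in> {y. 1/2 \<le> F y \<and> F y \<le> 1}"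
    then have "m * norm y \<le> 1" using m(2)[rule_format, of y] by auto
    then show "norm y \<le> 1/m" using m(1) by (simp add: field_simps mult.commute)
  qed
  ultimately show ?thesis by (simp add: compact_eq_bounded_closed)
qed

lemma A_nz: "{y. 1/2 \<le> F y \<and> F y \<le> 1} \<subseteq> UNIV - {0}"
  using F0 by auto

end

theorem lemma6:
  fixes F :: "'a::euclidean_space \<Rightarrow> real"
    and phi :: "nat \<Rightarrow> 'a"
    and n :: nat
  assumes dim: "DIM('a) = n + 1"
    and basis_inj: "inj_on phi {0..n}"
    and basis_indep: "independent (phi ` {0..n})"
    and pos: "\<forall>x. x \<noteq> 0 \<longrightarrow> F x > 0"
    and cvx: "convex_on UNIV F"
    and smooth: "C3_on (UNIV - {0}) F"
    and hom: "\<forall>t x. t > 0 \<longrightarrow> F (t *\<^sub>R x) = t * F x"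
    and unif: "\<forall>t>0. uniformly_convex_set {x. F x \<le> t}"
    and sym: "\<forall>p\<in>span (phi ` {1..n}). F (p + phi 0) = F (p - phi 0)"
  shows "\<exists>C2. \<forall>p\<in>span (phi ` {1..n}). \<forall>q\<in>span (phi ` {1..n}).
           F (p - phi 0) * D2 F (p - phi 0) p q \<le> C2 * F q / F (p - phi 0)"
proof -
  interpret hF2 F using smooth hom pos cvx by unfold_locales auto
  let ?S = "phi ` {1..n}"
  let ?a = "phi 0"
  let ?A = "{y. 1/2 \<le> F y \<and> F y \<le> 1}"
  have Anz: "\<And>z. z \<in> ?A \<Longrightarrow> z \<noteq> 0" using A_nz by blast
  obtain m where m: "m > 0" "\<forall>y. m * norm y \<le> F y" using lower by blast
  obtain K2 where K2: "K2 \<ge> 0" "\<forall>z\<in>?A. \<forall>q. \<bar>D2 F z ?a q\<bar> \<le> K2 * norm q"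
    using compact_lin_bound[of ?A "\<lambda>z q. D2 F z ?a q", OF compactA D2_cont[OF A_nz]]
      D2_expand Anz by blast
  obtain K3 where K3: "K3 \<ge> 0" "\<forall>z\<in>?A. \<forall>q. \<bar>D3 F z ?a q ?a\<bar> \<le> K3 * norm q"
    using compact_lin_bound[of ?A "\<lambda>z q. D3 F z ?a q ?a", OF compactA D3_cont[OF A_nz]]
      D3_expand Anz by blast
  have a_notin: "?a \<notin> span ?S"
  proof
    assume "?a \<in> span ?S"
    moreover have "phi ` {0..n} - {?a} = ?S"
    proof -
      have "{0..n} = insert 0 {1..n}" by auto
      moreover have "phi 0 \<notin> phi ` {1..n}"
      proof
        assume "phi 0 \<in> phi ` {1..n}"
        then obtain k where k: "k \<in> {1..n}" "phi 0 = phi k" by auto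
        then have "0 = k" using basis_inj unfolding inj_on_def by (metis atLeastAtMost_iff le0)
        then show False using k by auto
      qed
      ultimately show ?thesis by auto
    qed
    ultimately have "dependent (phi ` {0..n})"
      unfolding dependent_def by (metis atLeastAtMost_iff image_eqI le0)
    then show False using basis_indep by blast
  qed
  have a0: "?a \<noteq> 0" using a_notin span_zero by metis
  have Fa: "F (- ?a) > 0" using pos a0 by auto
  define K where "K = 2 * F (- ?a) * K2 + K3"
  have K0: "K \<ge> 0" unfolding K_def using Fa K2(1) K3(1) by simp
  show ?thesis
  proof (intro exI[of _ "K / m"] ballI)
    fix p q assume p: "p \<in> span ?S" and q: "q \<in> span ?S"
    define x where "x = p - ?a"
    have x0: "x \<noteq> 0" unfolding x_def using p a_notin by auto
    have fx: "F x > 0" using pos x0 by auto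
    define s where "s = 1 / F x"
    have s0: "s > 0" unfolding s_def using fx by simp
    define y where "y = s *\<^sub>R x"
    have Fy: "F y = 1" unfolding y_def s_def using hom fx by simp
    have y0: "y \<noteq> 0" using Fy F0 by auto
    define u where "u = s *\<^sub>R p"
    have u: "u \<in> span ?S" unfolding u_def using p by (simp add: span_mul)
    have yu: "y = u - s *\<^sub>R ?a" unfolding y_def u_def x_def by (simp add: algebra_simps)
    have step1: "D2 F x p q = D2 F x ?a q"
    proof -
      have "p = x + ?a" unfolding x_def by simp
      then have "D2 F x p q = D2 F x x q + D2 F x ?a q" using D2_first_add[OF x0] by metis
      then show ?thesis using D2_self[OF x0] by simp
    qed
    have xy: "x = F x *\<^sub>R y" unfolding y_def s_def using fx by simp
    have step2: "D2 F x ?a q = D2 F y ?a q / F x"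
      using D2_hom[OF fx y0] xy by metis
    have LHS: "F x * D2 F x p q = D2 F y ?a q" using step1 step2 fx by simp
    have key: "\<bar>D2 F y ?a q\<bar> \<le> K * s * norm q"
    proof (cases "F u \<ge> 1/2")
      case True
      have Fu1: "F u \<le> 1"
      proof -
        have "u = (1 - 1/2) *\<^sub>R (u - s *\<^sub>R ?a) + (1/2) *\<^sub>R (u + s *\<^sub>R ?a)"
          by (simp add: algebra_simps) (metis field_sum_of_halves scaleR_add_left scaleR_one)
        then have "F u \<le> (1 - 1/2) * F (u - s *\<^sub>R ?a) + (1/2) * F (u + s *\<^sub>R ?a)"
          using convex_onD[OF cvx, of "1/2" "u - s *\<^sub>R ?a" "u + s *\<^sub>R ?a"] by simp
        also have "F (u + s *\<^sub>R ?a) = F (u - s *\<^sub>R ?a)" using even[OF sym u] .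
        finally show ?thesis using Fy yu by simp
      qed
      have seg: "1/2 \<le> F (u - t *\<^sub>R ?a) \<and> F (u - t *\<^sub>R ?a) \<le> 1" if t: "0 \<le> t" "t \<le> s" for t
      proof
        have "u = (1 - 1/2) *\<^sub>R (u - t *\<^sub>R ?a) + (1/2) *\<^sub>R (u + t *\<^sub>R ?a)"
          by (simp add: algebra_simps) (metis field_sum_of_halves scaleR_add_left scaleR_one)
        then have "F u \<le> (1 - 1/2) * F (u - t *\<^sub>R ?a) + (1/2) * F (u + t *\<^sub>R ?a)"
          using convex_onD[OF cvx, of "1/2" "u - t *\<^sub>R ?a" "u + t *\<^sub>R ?a"] by simp
        also have "F (u + t *\<^sub>R ?a) = F (u - t *\<^sub>R ?a)" using even[OF sym u] .
        finally show "1/2 \<le> F (u - t *\<^sub>R ?a)" using True by simp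
        have "u - t *\<^sub>R ?a = (1 - t/s) *\<^sub>R u + (t/s) *\<^sub>R y"
        proof -
          have "(t/s) *\<^sub>R y = (t/s) *\<^sub>R u - t *\<^sub>R ?a" using s0 yu by (simp add: scaleR_diff_right)
          then show ?thesis by (simp add: algebra_simps)
        qed
        then have "F (u - t *\<^sub>R ?a) \<le> (1 - t/s) * F u + (t/s) * F y"
          using convex_onD[OF cvx, of "t/s" u y] t s0 by simp
        also have "\<dots> \<le> (1 - t/s) * 1 + (t/s) * 1"
          using Fu1 Fy t s0 by (intro add_mono mult_left_mono) auto
        finally show "F (u - t *\<^sub>R ?a) \<le> 1" by simp
      qed
      have der: "((\<lambda>t. D2 F (u - t *\<^sub>R ?a) ?a q) has_field_derivative
                  - D3 F (u - t *\<^sub>R ?a) ?a q ?a) (at t)" if t: "0 \<le> t" "t \<le> s" for t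
      proof -
        have z0: "u - t *\<^sub>R ?a \<noteq> 0" using seg[OF t] F0 by auto
        have d1: "((\<lambda>t::real. u - t *\<^sub>R ?a) has_derivative (\<lambda>h. - (h *\<^sub>R ?a))) (at t)"
          by (intro derivative_eq_intros) auto
        have lin: "linear (D3 F (u - t *\<^sub>R ?a) ?a q)"
          using D2_has[OF z0] has_derivative_linear by blast
        have "((\<lambda>t. D2 F (u - t *\<^sub>R ?a) ?a q) has_derivative
               (\<lambda>h. D3 F (u - t *\<^sub>R ?a) ?a q (- (h *\<^sub>R ?a)))) (at t)"
          using has_derivative_compose[OF d1, of "\<lambda>z. D2 F z ?a q"] D2_has[OF z0] by simp
        moreover have "(\<lambda>h. D3 F (u - t *\<^sub>R ?a) ?a q (- (h *\<^sub>R ?a))) =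
                       (*) (- D3 F (u - t *\<^sub>R ?a) ?a q ?a)"
          using lin by (auto simp: linear_neg linear_scale)
        ultimately show ?thesis unfolding has_field_derivative_def by simp
      qed
      obtain xi where xi: "0 < xi" "xi < s"
        "D2 F (u - s *\<^sub>R ?a) ?a q - D2 F (u - 0 *\<^sub>R ?a) ?a q
           = (s - 0) * (- D3 F (u - xi *\<^sub>R ?a) ?a q ?a)"
        using MVT2[OF s0, of "\<lambda>t. D2 F (u - t *\<^sub>R ?a) ?a q" "\<lambda>t. - D3 F (u - t *\<^sub>R ?a) ?a q ?a"]
          der by blast
      have u0: "u \<noteq> 0" using True F0 by auto
      have h0: "D2 F u ?a q = 0" using D2_zero[OF sym u u0 q] .
      have "D2 F y ?a q = - s * D3 F (u - xi *\<^sub>R ?a) ?a q ?a" using xi(3) h0 yu by simp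
      then have "\<bar>D2 F y ?a q\<bar> = s * \<bar>D3 F (u - xi *\<^sub>R ?a) ?a q ?a\<bar>" using s0 by (simp add: abs_mult)
      also have "\<dots> \<le> s * (K3 * norm q)"
        using K3(2) seg[of xi] xi s0 by (intro mult_left_mono) auto
      also have "\<dots> \<le> K * s * norm q"
        unfolding K_def using s0 Fa K2(1) by (simp add: algebra_simps)
      finally show ?thesis .
    next
      case False
      have "F y \<le> F u + F (s *\<^sub>R (- ?a))" using subadd[of u "s *\<^sub>R (- ?a)"] yu by simp
      also have "F (s *\<^sub>R (- ?a)) = s * F (- ?a)" using hom s0 by blast
      finally have "1 < 2 * s * F (- ?a)" using Fy False by simp
      have "y \<in> ?A" using Fy by simp
      then have "\<bar>D2 F y ?a q\<bar> \<le> K2 * norm q" using K2(2) by blast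
      also have "\<dots> \<le> K2 * norm q * (2 * s * F (- ?a))"
        using \<open>1 < 2 * s * F (- ?a)\<close> mult_nonneg_nonneg[OF K2(1) norm_ge_zero, of q] by (simp add: mult_le_cancel_left1)
      also have "\<dots> \<le> K * s * norm q"
        unfolding K_def using s0 Fa K3(1) by (simp add: algebra_simps)
      finally show ?thesis .
    qed
    have "F x * D2 F x p q \<le> K * s * norm q" using LHS key by simp
    also have "\<dots> = K * norm q / F x" unfolding s_def by simp
    also have "\<dots> \<le> (K / m) * F q / F x"
    proof -
      have "K * norm q \<le> (K / m) * F q"
        using m K0 mult_left_mono[OF m(2)[rule_format, of q], of "K/m"] by (simp add: field_simps)
      then have "K * norm q / F x \<le> ((K / m) * F q) / F x" using fx by (intro divide_right_mono) auto
      then show ?thesis by simp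
    qed
    finally show "F (p - ?a) * D2 F (p - ?a) p q \<le> K / m * F q / F (p - ?a)"
      unfolding x_def .
  qed
qed

end
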